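(* Let $\omega$ be a Hölder-like modulus of continuity and $(\mathcal{X},d_{\mathcal{X}})$ a metric space. Then $d^\omega_{\mathcal{X}}:=\omega\circ d_{\mathcal{X}}$ is a metric on $\mathcal{X}$, and the identity map $(\mathcal{X},d_{\mathcal{X}})\to(\mathcal{X},d^\omega_{\mathcal{X}})$ is quasisymmetric. Furthermore, if $K\subseteq\mathcal{X}$ is $d_{\mathcal{X}}$-doubling then it is also $d^\omega_{\mathcal{X}}$-doubling.
   Context: A Hölder-like modulus of continuity is a function $\omega:[0,\infty)\to[0,\infty)$ with $\omega(0)=0$ that is strictly increasing, subadditive and continuous, for which there is an increasing homeomorphism $h_\omega:[0,\infty)\to[0,\infty)$ with $\omega(st)\le h_\omega(s)\omega(t)$ for all $s,t\ge0$. A topological embedding $\varphi:(\mathcal{X},d_{\mathcal{X}})\to(\mathcal{Y},d_{\mathcal{Y}})$ is quasisymmetric if there is a strictly increasing surjection $\eta:[0,\infty)\to[0,\infty)$ such that $d_{\mathcal{X}}(x_1,x_2)\le t\,d_{\mathcal{X}}(x_1,x_3)$ implies $d_{\mathcal{Y}}(\varphi(x_1),\varphi(x_2))\le\eta(t)d_{\mathcal{Y}}(\varphi(x_1),\varphi(x_3))$. A (subset of a) metric space is doubling if there is a finite number $C$ such that every ball of radius $2r$ can be covered by $C$ balls of radius $r$. *)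

theory Defs
  imports "HOL-Analysis.Analysis"
begin

definition holder_like_modulus :: "(real \<Rightarrow> real) \<Rightarrow> bool" where
  "holder_like_modulus \<omega> \<longleftrightarrow>
     \<omega> ` {0..} \<subseteq> {0..} \<and> \<omega> 0 = 0 \<and>
     strict_mono_on {0..} \<omega> \<and>
     (\<forall>s\<ge>0. \<forall>t\<ge>0. \<omega> (s + t) \<le> \<omega> s + \<omega> t) \<and>
     continuous_on {0..} \<omega> \<and>
     (\<exists>h g. homeomorphism {0..} {0..} h g \<and> mono_on {0..} h \<and>
        (\<forall>s\<ge>0. \<forall>t\<ge>0. \<omega> (s * t) \<le> h s * \<omega> t))"

definition quasisymmetric ::
  "'a set \<Rightarrow> ('a \<Rightarrow> 'a \<Rightarrow> real) \<Rightarrow> 'b set \<Rightarrow> ('b \<Rightarrow> 'b \<Rightarrow> real) \<Rightarrow> ('a \<Rightarrow> 'b) \<Rightarrow> bool" where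
  "quasisymmetric M1 d1 M2 d2 f \<longleftrightarrow>
     embedding_map (Metric_space.mtopology M1 d1) (Metric_space.mtopology M2 d2) f \<and>
     (\<exists>\<eta>::real \<Rightarrow> real. strict_mono_on {0..} \<eta> \<and> \<eta> ` {0..} = {0..} \<and>
        (\<forall>x1\<in>M1. \<forall>x2\<in>M1. \<forall>x3\<in>M1. \<forall>t\<ge>0.
           d1 x1 x2 \<le> t * d1 x1 x3 \<longrightarrow> d2 (f x1) (f x2) \<le> \<eta> t * d2 (f x1) (f x3)))"

definition doubling_subset :: "'a set \<Rightarrow> ('a \<Rightarrow> 'a \<Rightarrow> real) \<Rightarrow> 'a set \<Rightarrow> bool" where
  "doubling_subset M d K \<longleftrightarrow>
     (\<exists>C::nat. \<forall>x\<in>K. \<forall>r>0. \<exists>F. finite F \<and> card F \<le> C \<and> F \<subseteq> K \<and>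
        K \<inter> Metric_space.mball M d x (2 * r) \<subseteq> (\<Union>y\<in>F. Metric_space.mball M d y r))"

end

theory Submission
  imports Defs
begin

context Metric_space
begin

lemma iter_doubling:
  assumes C: "\<forall>x\<in>K. \<forall>r>0. \<exists>F. finite F \<and> card F \<le> C \<and> F \<subseteq> K \<and>
        K \<inter> mball x (2 * r) \<subseteq> (\<Union>y\<in>F. mball y r)"
    and KM: "K \<subseteq> M"
  shows "x \<in> K \<Longrightarrow> r > 0 \<Longrightarrow> \<exists>F. finite F \<and> card F \<le> C ^ n \<and> F \<subseteq> K \<and>
        K \<inter> mball x (2 ^ n * r) \<subseteq> (\<Union>y\<in>F. mball y r)"
proof (induction n arbitrary: x)
  case 0
  then show ?case by (intro exI[of _ "{x}"]) auto
next
  case (Suc n)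
  have pos: "2 ^ n * r > 0" using Suc.prems by simp
  have "\<exists>F. finite F \<and> card F \<le> C \<and> F \<subseteq> K \<and>
        K \<inter> mball x (2 * (2 ^ n * r)) \<subseteq> (\<Union>y\<in>F. mball y (2 ^ n * r))"
    using mp[OF spec[OF bspec[OF C Suc.prems(1)], of "2 ^ n * r"] pos] .
  then obtain F where F: "finite F" "card F \<le> C" "F \<subseteq> K"
    "K \<inter> mball x (2 * (2 ^ n * r)) \<subseteq> (\<Union>y\<in>F. mball y (2 ^ n * r))"
    by (elim exE conjE) (intro that)
  have "\<forall>y\<in>F. \<exists>G. finite G \<and> card G \<le> C ^ n \<and> G \<subseteq> K \<and>
        K \<inter> mball y (2 ^ n * r) \<subseteq> (\<Union>z\<in>G. mball z r)"
  proof
    fix y assume "y \<in> F"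
    then have "y \<in> K" using F(3) by blast
    then show "\<exists>G. finite G \<and> card G \<le> C ^ n \<and> G \<subseteq> K \<and>
        K \<inter> mball y (2 ^ n * r) \<subseteq> (\<Union>z\<in>G. mball z r)"
      by (rule Suc.IH[OF _ Suc.prems(2)])
  qed
  then obtain G where G: "\<And>y. y \<in> F \<Longrightarrow> finite (G y) \<and> card (G y) \<le> C ^ n \<and> G y \<subseteq> K \<and>
        K \<inter> mball y (2 ^ n * r) \<subseteq> (\<Union>z\<in>G y. mball z r)"
    by metis
  have fin: "finite (\<Union>y\<in>F. G y)" using F(1) G by auto
  have "card (\<Union>y\<in>F. G y) \<le> (\<Sum>y\<in>F. card (G y))" by (rule card_UN_le[OF F(1)])
  also have "\<dots> \<le> (\<Sum>y\<in>F. C ^ n)" by (rule sum_mono) (use G in auto)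
  also have "\<dots> = card F * C ^ n" by simp
  also have "\<dots> \<le> C * C ^ n" using F(2) by simp
  finally have cardle: "card (\<Union>y\<in>F. G y) \<le> C ^ Suc n" by simp
  have cov: "K \<inter> mball x (2 ^ Suc n * r) \<subseteq> (\<Union>z\<in>(\<Union>y\<in>F. G y). mball z r)"
  proof
    fix w assume w: "w \<in> K \<inter> mball x (2 ^ Suc n * r)"
    then have "w \<in> K \<inter> mball x (2 * (2 ^ n * r))" by (simp add: mult.assoc)
    then obtain y where y: "y \<in> F" "w \<in> mball y (2 ^ n * r)" using F(4) by blast
    then have "w \<in> K \<inter> mball y (2 ^ n * r)" using w by blast
    then show "w \<in> (\<Union>z\<in>(\<Union>y\<in>F. G y). mball z r)" using G[OF y(1)] y(1) by blast
  qed
  show ?case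
    by (intro exI[of _ "\<Union>y\<in>F. G y"]) (use fin cardle cov G in auto)
qed

end

theorem mainTheorem8:
  fixes \<omega> :: "real \<Rightarrow> real" and X :: "'a set" and d :: "'a \<Rightarrow> 'a \<Rightarrow> real"
  assumes "holder_like_modulus \<omega>"
    and "Metric_space X d"
  shows "Metric_space X (\<lambda>x y. \<omega> (d x y))
    \<and> quasisymmetric X d X (\<lambda>x y. \<omega> (d x y)) id
    \<and> (\<forall>K. K \<subseteq> X \<longrightarrow> doubling_subset X d K \<longrightarrow> doubling_subset X (\<lambda>x y. \<omega> (d x y)) K)"
proof -
  interpret D: Metric_space X d by fact
  have wnn: "\<And>t. t \<ge> 0 \<Longrightarrow> \<omega> t \<ge> 0" and w0: "\<omega> 0 = 0"
    and smono: "strict_mono_on {0..} \<omega>"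
    and sub: "\<And>s t. s \<ge> 0 \<Longrightarrow> t \<ge> 0 \<Longrightarrow> \<omega> (s + t) \<le> \<omega> s + \<omega> t"
    and wcont: "continuous_on {0..} \<omega>"
    using assms(1) unfolding holder_like_modulus_def by auto
  have ex: "\<exists>h g. homeomorphism {0..} {0..} h g \<and> mono_on {0..} h \<and>
        (\<forall>s\<ge>0. \<forall>t\<ge>0. \<omega> (s * t) \<le> h s * \<omega> t)"
    using assms(1) unfolding holder_like_modulus_def by (elim conjE) assumption
  then obtain h g where hom: "homeomorphism {0..} {0..} h g" and hmono: "mono_on {0..} h"
    and hw: "\<And>s t. s \<ge> 0 \<Longrightarrow> t \<ge> 0 \<Longrightarrow> \<omega> (s * t) \<le> h s * \<omega> t"
    by blast
  have wlt1: "\<And>s t. 0 \<le> s \<Longrightarrow> s < t \<Longrightarrow> \<omega> s < \<omega> t"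
    using smono unfolding strict_mono_on_def by simp
  have wlt: "\<omega> s < \<omega> t \<longleftrightarrow> s < t" if "0 \<le> s" "0 \<le> t" for s t
  proof (cases s t rule: linorder_cases)
    case greater then show ?thesis using wlt1[of t s] that by auto
  qed (use wlt1 that in auto)
  have wle: "\<And>s t. 0 \<le> s \<Longrightarrow> 0 \<le> t \<Longrightarrow> \<omega> s \<le> \<omega> t \<longleftrightarrow> s \<le> t"
    using wlt by (meson not_less)
  have wpos: "\<And>t. t > 0 \<Longrightarrow> \<omega> t > 0" using wlt[of 0] w0 by auto
  interpret W: Metric_space X "\<lambda>x y. \<omega> (d x y)"
  proof
    fix x y z
    show "0 \<le> \<omega> (d x y)" by (simp add: wnn)
    show "\<omega> (d x y) = \<omega> (d y x)" by (simp add: D.commute)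
    assume "x \<in> X" "y \<in> X"
    then show "\<omega> (d x y) = 0 \<longleftrightarrow> x = y"
      using wpos w0 by (smt (verit) D.nonneg D.zero)
  next
    fix x y z assume xyz: "x \<in> X" "y \<in> X" "z \<in> X"
    have "\<omega> (d x z) \<le> \<omega> (d x y + d y z)"
      using wle D.triangle[OF xyz] by simp
    also have "\<dots> \<le> \<omega> (d x y) + \<omega> (d y z)" by (simp add: sub)
    finally show "\<omega> (d x z) \<le> \<omega> (d x y) + \<omega> (d y z)" .
  qed
  have part1: "Metric_space X (\<lambda>x y. \<omega> (d x y))" by (rule W.Metric_space_axioms)
  have topeq: "W.mtopology = D.mtopology"
    unfolding topology_eq
  proof (intro allI)
    fix U
    have A: "\<exists>r>0. D.mball x r \<subseteq> W.mball x e" if "e > 0" for x e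
    proof -
      have "continuous (at 0 within {0..}) \<omega>"
        using wcont by (simp add: continuous_on_eq_continuous_within)
      then obtain \<delta> where \<delta>: "\<delta> > 0" "\<And>t. t \<in> {0..} \<Longrightarrow> dist t 0 < \<delta> \<Longrightarrow> dist (\<omega> t) (\<omega> 0) < e"
        using \<open>e > 0\<close> unfolding continuous_within_eps_delta by blast
      have "D.mball x \<delta> \<subseteq> W.mball x e"
      proof
        fix y assume "y \<in> D.mball x \<delta>"
        then have "x \<in> X" "y \<in> X" "d x y < \<delta>" by auto
        moreover have "\<omega> (d x y) < e" using \<delta>(2)[of "d x y"] \<open>d x y < \<delta>\<close> w0 wnn[of "d x y"] by simp
        ultimately show "y \<in> W.mball x e" by simp
      qed
      then show ?thesis using \<delta>(1) by blast
    qed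
    have B: "\<exists>r>0. W.mball x r \<subseteq> D.mball x e" if "e > 0" for x e
    proof -
      have "W.mball x (\<omega> e) \<subseteq> D.mball x e"
        using wlt[of _ e] \<open>e > 0\<close> by auto
      then show ?thesis using wpos[OF \<open>e > 0\<close>] by blast
    qed
    show "openin W.mtopology U = openin D.mtopology U"
      unfolding W.openin_mtopology D.openin_mtopology
    proof (intro iffI conjI allI impI)
      assume H: "U \<subseteq> X \<and> (\<forall>x. x \<in> U \<longrightarrow> (\<exists>r>0. W.mball x r \<subseteq> U))"
      then show "U \<subseteq> X" by blast
      fix x assume "x \<in> U"
      then obtain e where e: "e > 0" "W.mball x e \<subseteq> U" using H by blast
      then obtain r where "r > 0" "D.mball x r \<subseteq> W.mball x e" using A by blast
      then show "\<exists>r>0. D.mball x r \<subseteq> U" using e by blast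
    next
      assume H: "U \<subseteq> X \<and> (\<forall>x. x \<in> U \<longrightarrow> (\<exists>r>0. D.mball x r \<subseteq> U))"
      then show "U \<subseteq> X" by blast
      fix x assume "x \<in> U"
      then obtain e where e: "e > 0" "D.mball x e \<subseteq> U" using H by blast
      then obtain r where "r > 0" "W.mball x r \<subseteq> D.mball x e" using B by blast
      then show "\<exists>r>0. W.mball x r \<subseteq> U" using e by blast
    qed
  qed
  have himg: "h ` {0..} = {0..}" and hcont: "continuous_on {0..} h"
    using hom unfolding homeomorphism_def by auto
  have hinj: "inj_on h {0..}" using hom unfolding homeomorphism_def by (metis inj_on_inverseI)
  have hsm: "strict_mono_on {0..} h"
  proof (rule strict_mono_onI)
    fix r s :: real assume rs: "r \<in> {0..}" "s \<in> {0..}" "r < s"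
    then have "h r \<le> h s" using hmono by (simp add: mono_onD)
    moreover have "h r \<noteq> h s" using hinj rs inj_on_eq_iff by fastforce
    ultimately show "h r < h s" by simp
  qed
  have part2: "quasisymmetric X d X (\<lambda>x y. \<omega> (d x y)) id"
    unfolding quasisymmetric_def
  proof (intro conjI exI[of _ h])
    show "embedding_map D.mtopology W.mtopology id"
      unfolding embedding_map_def topeq by simp
    show "strict_mono_on {0..} h" by fact
    show "h ` {0..} = {0..}" by fact
    show "\<forall>x1\<in>X. \<forall>x2\<in>X. \<forall>x3\<in>X. \<forall>t\<ge>0. d x1 x2 \<le> t * d x1 x3 \<longrightarrow>
        \<omega> (d (id x1) (id x2)) \<le> h t * \<omega> (d (id x1) (id x3))"
    proof (intro ballI allI impI)
      fix x1 x2 x3 and t :: real assume "t \<ge> 0" "d x1 x2 \<le> t * d x1 x3"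
      then have "\<omega> (d x1 x2) \<le> \<omega> (t * d x1 x3)" using wle by simp
      also have "\<dots> \<le> h t * \<omega> (d x1 x3)" using hw \<open>t \<ge> 0\<close> by simp
      finally show "\<omega> (d (id x1) (id x2)) \<le> h t * \<omega> (d (id x1) (id x3))" by simp
    qed
  qed
  have h0: "h 0 = 0"
  proof -
    obtain a where a: "a \<ge> 0" "h a = 0" using himg by (metis atLeast_iff imageE order_refl)
    have "h 0 \<le> h a" using hmono a by (intro mono_onD[OF hmono]) auto
    moreover have "h 0 \<ge> 0" using himg by auto
    ultimately show ?thesis using a by simp
  qed
  obtain s0 where s0: "s0 > 0" "h s0 \<le> 1/2"
  proof -
    have "continuous (at 0 within {0..}) h"
      using hcont by (simp add: continuous_on_eq_continuous_within)
    then obtain \<delta> where \<delta>: "\<delta> > 0" "\<And>t. t \<in> {0..} \<Longrightarrow> dist t 0 < \<delta> \<Longrightarrow> dist (h t) (h 0) < 1/2"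
      unfolding continuous_within_eps_delta by (meson divide_pos_pos zero_less_one zero_less_numeral)
    have "dist (h (\<delta>/2)) (h 0) < 1/2" using \<delta> by simp
    then have "h (\<delta>/2) \<le> 1/2" using h0 by (simp add: dist_real_def)
    then show ?thesis using that[of "\<delta>/2"] \<delta>(1) by simp
  qed
  have grow: "2 * \<omega> t \<le> \<omega> (t / s0)" if "t \<ge> 0" for t
  proof -
    have "\<omega> t = \<omega> (s0 * (t / s0))" using s0 by simp
    also have "\<dots> \<le> h s0 * \<omega> (t / s0)" using s0 that by (intro hw) auto
    also have "\<dots> \<le> 1/2 * \<omega> (t / s0)"
      using s0 wnn[of "t/s0"] that by (intro mult_right_mono) auto
    finally show ?thesis by simp
  qed
  have unb: "2 ^ n * \<omega> 1 \<le> \<omega> ((1/s0) ^ n)" for n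
  proof (induction n)
    case 0 then show ?case by simp
  next
    case (Suc n)
    have "2 ^ Suc n * \<omega> 1 \<le> 2 * \<omega> ((1/s0) ^ n)" using Suc by simp
    also have "\<dots> \<le> \<omega> ((1/s0) ^ n / s0)" using grow s0 by simp
    finally show ?case by (simp add: field_simps)
  qed
  have findrho: "\<exists>\<rho>>0. \<omega> \<rho> = r" if rpos: "r > 0" for r
  proof -
    have w1: "\<omega> 1 > 0" using wpos by simp
    obtain n where n: "r / \<omega> 1 < 2 ^ n" using real_arch_pow[of 2 "r / \<omega> 1"] by auto
    then have "r \<le> \<omega> ((1/s0) ^ n)" using unb[of n] w1 by (simp add: field_simps)
    moreover have "(0::real) \<le> (1/s0) ^ n" using s0 by simp
    ultimately obtain \<rho> where "0 \<le> \<rho>" "\<rho> \<le> (1/s0) ^ n" "\<omega> \<rho> = r"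
      using IVT'[of \<omega> 0 r "(1/s0)^n"] w0 rpos continuous_on_subset[OF wcont, of "{0..(1/s0)^n}"]
      by force
    then show ?thesis using rpos w0 by (metis less_eq_real_def)
  qed
  obtain m where m: "1 / s0 < 2 ^ m" using real_arch_pow[of 2 "1/s0"] by auto
  have part3: "doubling_subset X d K \<Longrightarrow> doubling_subset X (\<lambda>x y. \<omega> (d x y)) K" if KX: "K \<subseteq> X" for K
  proof -
    assume "doubling_subset X d K"
    then obtain C where C: "\<forall>x\<in>K. \<forall>r>0. \<exists>F. finite F \<and> card F \<le> C \<and> F \<subseteq> K \<and>
        K \<inter> D.mball x (2 * r) \<subseteq> (\<Union>y\<in>F. D.mball y r)"
      unfolding doubling_subset_def by blast
    show ?thesis
      unfolding doubling_subset_def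
    proof (intro exI[of _ "C ^ m"] ballI allI impI)
      fix x r assume x: "x \<in> K" and r: "(r::real) > 0"
      obtain \<rho> where \<rho>: "\<rho> > 0" "\<omega> \<rho> = r" using findrho r by blast
      obtain F where F: "finite F" "card F \<le> C ^ m" "F \<subseteq> K"
        "K \<inter> D.mball x (2 ^ m * \<rho>) \<subseteq> (\<Union>y\<in>F. D.mball y \<rho>)"
        using D.iter_doubling[OF C KX x \<rho>(1), where n=m] by auto
      have "K \<inter> W.mball x (2 * r) \<subseteq> (\<Union>y\<in>F. W.mball y r)"
      proof
        fix z assume z: "z \<in> K \<inter> W.mball x (2 * r)"
        then have zz: "x \<in> X" "z \<in> X" "\<omega> (d x z) < 2 * r" by auto
        have "d x z < \<rho> / s0"
        proof (rule ccontr)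
          assume "\<not> d x z < \<rho> / s0"
          then have "\<omega> (\<rho> / s0) \<le> \<omega> (d x z)" using wle \<rho> s0 by simp
          moreover have "2 * r \<le> \<omega> (\<rho> / s0)" using grow[of \<rho>] \<rho> by simp
          ultimately show False using zz by simp
        qed
        also have "\<rho> / s0 < 2 ^ m * \<rho>" using m \<rho> s0 by (simp add: field_simps)
        finally have "z \<in> K \<inter> D.mball x (2 ^ m * \<rho>)" using z zz by simp
        then obtain y where y: "y \<in> F" "z \<in> D.mball y \<rho>" using F(4) by blast
        then have "z \<in> W.mball y r" using wlt[of "d y z" \<rho>] \<rho> by auto
        then show "z \<in> (\<Union>y\<in>F. W.mball y r)" using y by blast
      qed
      then show "\<exists>F. finite F \<and> card F \<le> C ^ m \<and> F \<subseteq> K \<and>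
          K \<inter> W.mball x (2 * r) \<subseteq> (\<Union>y\<in>F. W.mball y r)"
        using F by blast
    qed
  qed
  show ?thesis using part1 part2 part3 by (intro conjI allI impI) auto
qed

end
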